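(* Let $n\ge4$ and let $\lambda=(a_1,\dots,a_n)$ (usual coordinates) be a dominant weight of $SL(n)$ all of whose coordinates $a_i$ are non-integers. If the collection $a_1,\dots,a_n$ takes at least three distinct values, then $M(\lambda)$ contains a point three of whose coordinates are equal to $\alpha+1,\alpha,\alpha-1$ for some $\alpha\in\mathbb R$.
   Context: Setup for $SL(n)$: $\varepsilon_1,\dots,\varepsilon_n$ is the standard basis of $\mathbb Q^n$, $e_i=\varepsilon_i-\frac1n(1,\dots,1)$; the character lattice $\mathfrak X(T)$ of the diagonal torus is identified with the $\mathbb Z$-span of $e_1,\dots,e_n$ inside $\{y\in\mathbb Q^n:\sum y_i=0\}$ (the $y_i$ are the "usual coordinates"). $W=S_n$ acts by permuting coordinates. A weight is dominant if $y_1\ge y_2\ge\dots\ge y_n$. The root lattice is $\Phi=\{\sum a_ie_i\mid a_i\in\mathbb Z,\ \sum a_i\equiv0\pmod n\}$. For a dominant weight $\lambda$, $M(\lambda)=\mathrm{conv}\{w\lambda\mid w\in W\}\cap(\lambda+\Phi)$. *)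

theory Defs
  imports "HOL-Combinatorics.Permutations" Complex_Main
begin

text \<open>Vectors in Q^n (embedded in R^n) are represented as functions nat => real;
  only the coordinates i < n are meaningful, the others are 0.\<close>

definition basis_e :: "nat \<Rightarrow> nat \<Rightarrow> nat \<Rightarrow> real" where
  "basis_e n i = (\<lambda>j. if j < n then (if j = i then 1 else 0) - 1 / real n else 0)"

definition char_lattice :: "nat \<Rightarrow> (nat \<Rightarrow> real) set" where
  "char_lattice n = {y. \<exists>c :: nat \<Rightarrow> int. y = (\<lambda>j. \<Sum>i<n. of_int (c i) * basis_e n i j)}"

definition root_lattice :: "nat \<Rightarrow> (nat \<Rightarrow> real) set" where
  "root_lattice n = {y. \<exists>c :: nat \<Rightarrow> int. (\<Sum>i<n. c i) mod int n = 0 \<and>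
                        y = (\<lambda>j. \<Sum>i<n. of_int (c i) * basis_e n i j)}"

definition dominant :: "nat \<Rightarrow> (nat \<Rightarrow> real) \<Rightarrow> bool" where
  "dominant n y \<longleftrightarrow> (\<forall>i j. i \<le> j \<and> j < n \<longrightarrow> y j \<le> y i)"

definition weyl_orbit :: "nat \<Rightarrow> (nat \<Rightarrow> real) \<Rightarrow> (nat \<Rightarrow> real) set" where
  "weyl_orbit n y = {(\<lambda>i. y (inv w i)) | w. w permutes {..<n}}"

definition conv_fin :: "(nat \<Rightarrow> real) set \<Rightarrow> (nat \<Rightarrow> real) set" where
  "conv_fin S = {x. \<exists>t :: (nat \<Rightarrow> real) \<Rightarrow> real. (\<forall>p\<in>S. 0 \<le> t p) \<and> sum t S = 1 \<and>
                     x = (\<lambda>i. \<Sum>p\<in>S. t p * p i)}"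

definition M_set :: "nat \<Rightarrow> (nat \<Rightarrow> real) \<Rightarrow> (nat \<Rightarrow> real) set" where
  "M_set n lam = conv_fin (weyl_orbit n lam) \<inter> {(\<lambda>i. lam i + p i) | p. p \<in> root_lattice n}"

end

theory Submission
  imports Defs
begin

lemma orbit_finite: "finite (weyl_orbit n lam)"
proof -
  have "weyl_orbit n lam = (\<lambda>w. \<lambda>i. lam (inv w i)) ` {w. w permutes {..<n}}"
    unfolding weyl_orbit_def by auto
  thus ?thesis using finite_permutations[of "{..<n}"] by simp
qed

lemma lam_in_orbit: "lam \<in> weyl_orbit n lam"
  unfolding weyl_orbit_def by (rule CollectI, rule exI[of _ id]) (auto simp: permutes_id)

lemma lam_in_conv: "lam \<in> conv_fin (weyl_orbit n lam)"
proof -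
  let ?O = "weyl_orbit n lam"
  define t where "t = (\<lambda>p::nat\<Rightarrow>real. if p = lam then (1::real) else 0)"
  have "sum t ?O = 1" unfolding t_def using orbit_finite lam_in_orbit by (simp add: sum.delta)
  moreover have "lam = (\<lambda>i. \<Sum>p\<in>?O. t p * p i)"
  proof
    fix i
    have "(\<Sum>p\<in>?O. t p * p i) = (\<Sum>p\<in>?O. if p = lam then lam i else 0)"
      by (rule sum.cong) (auto simp: t_def)
    also have "\<dots> = lam i" using orbit_finite lam_in_orbit by (simp add: sum.delta)
    finally show "lam i = (\<Sum>p\<in>?O. t p * p i)" by simp
  qed
  ultimately show ?thesis unfolding conv_fin_def
    by (intro CollectI exI[of _ t] conjI) (auto simp: t_def)
qed

lemma conv_comb:
  assumes "x \<in> conv_fin S" "y \<in> conv_fin S" "0 \<le> u" "u \<le> 1"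
  shows "(\<lambda>k. u * x k + (1 - u) * y k) \<in> conv_fin S"
proof -
  obtain t1 where t1: "\<forall>p\<in>S. 0 \<le> t1 p" "sum t1 S = 1" "x = (\<lambda>i. \<Sum>p\<in>S. t1 p * p i)"
    using assms(1) unfolding conv_fin_def by auto
  obtain t2 where t2: "\<forall>p\<in>S. 0 \<le> t2 p" "sum t2 S = 1" "y = (\<lambda>i. \<Sum>p\<in>S. t2 p * p i)"
    using assms(2) unfolding conv_fin_def by auto
  define t where "t = (\<lambda>p. u * t1 p + (1 - u) * t2 p)"
  have "\<forall>p\<in>S. 0 \<le> t p" using t1 t2 assms(3,4) unfolding t_def by auto
  moreover have "sum t S = 1" unfolding t_def
    by (simp add: sum.distrib sum_distrib_left[symmetric] t1 t2)
  moreover have "(\<lambda>k. u * x k + (1 - u) * y k) = (\<lambda>i. \<Sum>p\<in>S. t p * p i)"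
  proof
    fix i
    have "(\<Sum>p\<in>S. t p * p i) = (\<Sum>p\<in>S. u * (t1 p * p i) + (1 - u) * (t2 p * p i))"
      by (rule sum.cong) (auto simp: t_def algebra_simps)
    also have "\<dots> = u * x i + (1 - u) * y i"
      by (simp add: sum.distrib sum_distrib_left[symmetric] t1(3) t2(3))
    finally show "u * x i + (1 - u) * y i = (\<Sum>p\<in>S. t p * p i)" by simp
  qed
  ultimately show ?thesis unfolding conv_fin_def by blast
qed

lemma orbit_swap:
  assumes "p \<in> weyl_orbit n lam" "i < n" "j < n"
  shows "(\<lambda>k. p (Transposition.transpose i j k)) \<in> weyl_orbit n lam"
proof -
  obtain w where w: "w permutes {..<n}" "p = (\<lambda>i. lam (inv w i))"
    using assms(1) unfolding weyl_orbit_def by auto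
  let ?s = "Transposition.transpose i j"
  have sp: "?s permutes {..<n}" using assms by (simp add: permutes_swap_id)
  have "inv (?s \<circ> w) = inv w \<circ> inv ?s"
    by (rule o_inv_distrib) (use w sp in \<open>auto intro: permutes_bij\<close>)
  hence "(\<lambda>k. p (?s k)) = (\<lambda>k. lam (inv (?s \<circ> w) k))" using w by auto
  moreover have "?s \<circ> w permutes {..<n}" using w sp by (simp add: permutes_compose)
  ultimately show ?thesis unfolding weyl_orbit_def by blast
qed

lemma conv_swap:
  assumes "x \<in> conv_fin (weyl_orbit n lam)" "i < n" "j < n"
  shows "(\<lambda>k. x (Transposition.transpose i j k)) \<in> conv_fin (weyl_orbit n lam)"
proof -
  let ?O = "weyl_orbit n lam"
  let ?s = "Transposition.transpose i j"
  let ?f = "\<lambda>p::nat\<Rightarrow>real. (\<lambda>k. p (?s k))"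
  obtain t where t: "\<forall>p\<in>?O. 0 \<le> t p" "sum t ?O = 1" "x = (\<lambda>i. \<Sum>p\<in>?O. t p * p i)"
    using assms(1) unfolding conv_fin_def by auto
  have inv: "?f (?f p) = p" for p by auto
  have mem: "p \<in> ?O \<Longrightarrow> ?f p \<in> ?O" for p using orbit_swap assms(2,3) by blast
  have "\<forall>p\<in>?O. 0 \<le> (t \<circ> ?f) p" using t(1) mem by auto
  moreover have "sum (t \<circ> ?f) ?O = 1"
  proof -
    have "sum (t \<circ> ?f) ?O = sum t ?O"
      by (rule sum.reindex_bij_witness[where i="?f" and j="?f"]) (use mem in auto)
    thus ?thesis using t(2) by simp
  qed
  moreover have "(\<lambda>k. x (?s k)) = (\<lambda>k. \<Sum>p\<in>?O. (t \<circ> ?f) p * p k)"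
  proof
    fix k
    show "x (?s k) = (\<Sum>p\<in>?O. (t \<circ> ?f) p * p k)"
      unfolding t(3)
      by (rule sum.reindex_bij_witness[where i="?f" and j="?f"]) (use mem in auto)
  qed
  ultimately show ?thesis unfolding conv_fin_def by blast
qed

lemma pair_move:
  assumes "x \<in> conv_fin (weyl_orbit n lam)" "i < n" "j < n" "i \<noteq> j"
    and "(x j \<le> s \<and> s \<le> x i) \<or> (x i \<le> s \<and> s \<le> x j)"
  shows "x(i := s, j := x i + x j - s) \<in> conv_fin (weyl_orbit n lam)"
proof (cases "x i = x j")
  case True
  hence "s = x i" using assms(5) by auto
  hence "x(i := s, j := x i + x j - s) = x" using True by auto
  thus ?thesis using assms(1) by simp
next
  case False
  define u where "u = (s - x j) / (x i - x j)"
  have u01: "0 \<le> u \<and> u \<le> 1"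
  proof (cases "x j < x i")
    case True thus ?thesis using assms(5) unfolding u_def by (auto simp: divide_simps)
  next
    case F: False
    hence "x i < x j" using False by auto
    thus ?thesis using assms(5) unfolding u_def by (auto simp: divide_simps)
  qed
  let ?s = "Transposition.transpose i j"
  have y: "(\<lambda>k. x (?s k)) \<in> conv_fin (weyl_orbit n lam)" using conv_swap assms by blast
  have z: "(\<lambda>k. u * x k + (1 - u) * x (?s k)) \<in> conv_fin (weyl_orbit n lam)"
    using conv_comb[OF assms(1) y] u01 by blast
  have d: "x i - x j \<noteq> 0" using False by simp
  have "(\<lambda>k. u * x k + (1 - u) * x (?s k)) = x(i := s, j := x i + x j - s)"
  proof
    fix k
    show "u * x k + (1 - u) * x (?s k) = (x(i := s, j := x i + x j - s)) k"
    proof (cases "k = i \<or> k = j")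
      case True
      have h: "u * (x i - x j) = s - x j" unfolding u_def using d by simp
      show ?thesis using True assms(4) h by (auto simp: algebra_simps)
    next
      case False
      then show ?thesis by (auto simp: algebra_simps)
    qed
  qed
  thus ?thesis using z by simp
qed

lemma conv_props:
  assumes "x \<in> conv_fin (weyl_orbit n lam)"
  shows "(\<forall>k. n \<le> k \<longrightarrow> x k = lam k) \<and> (\<Sum>k<n. x k) = (\<Sum>k<n. lam k)"
proof -
  let ?O = "weyl_orbit n lam"
  obtain t where t: "\<forall>p\<in>?O. 0 \<le> t p" "sum t ?O = 1" "x = (\<lambda>i. \<Sum>p\<in>?O. t p * p i)"
    using assms(1) unfolding conv_fin_def by auto
  have P: "p \<in> ?O \<Longrightarrow> (\<forall>k. n \<le> k \<longrightarrow> p k = lam k) \<and> (\<Sum>k<n. p k) = (\<Sum>k<n. lam k)" for p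
  proof -
    assume "p \<in> ?O"
    then obtain w where w: "w permutes {..<n}" "p = (\<lambda>i. lam (inv w i))"
      unfolding weyl_orbit_def by auto
    have iw: "inv w permutes {..<n}" using w(1) by (rule permutes_inv)
    have "\<forall>k. n \<le> k \<longrightarrow> p k = lam k" using w(2) permutes_not_in[OF iw] by auto
    moreover have "(\<Sum>k<n. lam k) = (\<Sum>k<n. (lam \<circ> inv w) k)"
      using sum.permute[OF iw] by blast
    ultimately show ?thesis using w(2) by (simp add: o_def)
  qed
  have "\<forall>k. n \<le> k \<longrightarrow> x k = lam k"
  proof (intro allI impI)
    fix k assume k: "n \<le> k"
    have "x k = (\<Sum>p\<in>?O. t p * lam k)" unfolding t(3) by (rule sum.cong) (use P k in auto)
    also have "\<dots> = lam k" using t(2) by (simp add: sum_distrib_right[symmetric])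
    finally show "x k = lam k" .
  qed
  moreover have "(\<Sum>k<n. x k) = (\<Sum>k<n. lam k)"
  proof -
    have "(\<Sum>k<n. x k) = (\<Sum>p\<in>?O. t p * (\<Sum>k<n. p k))"
      unfolding t(3) by (simp add: sum.swap[of _ "{..<n}"] sum_distrib_left)
    also have "\<dots> = (\<Sum>p\<in>?O. t p * (\<Sum>k<n. lam k))" by (rule sum.cong) (use P in auto)
    also have "\<dots> = (\<Sum>k<n. lam k)" using t(2) by (simp add: sum_distrib_right[symmetric])
    finally show ?thesis .
  qed
  ultimately show ?thesis by blast
qed

lemma M_mem:
  assumes "x \<in> conv_fin (weyl_orbit n lam)" "\<forall>k<n. x k - lam k \<in> \<int>"
  shows "x \<in> M_set n lam"
proof -
  define p where "p = (\<lambda>k. x k - lam k)"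
  define c where "c = (\<lambda>k. \<lfloor>p k\<rfloor>)"
  have pc: "k < n \<Longrightarrow> of_int (c k) = p k" for k using assms(2) unfolding c_def p_def
    by (metis Ints_cases floor_of_int)
  note CP = conv_props[OF assms(1)]
  have sp: "(\<Sum>k<n. p k) = 0" unfolding p_def using CP by (simp add: sum_subtractf)
  have "real_of_int (\<Sum>i<n. c i) = (\<Sum>i<n. p i)" by (simp add: pc)
  hence "real_of_int (\<Sum>i<n. c i) = 0" using sp by simp
  hence sc: "(\<Sum>i<n. c i) = 0" by (simp only: of_int_eq_0_iff)
  have "p = (\<lambda>j. \<Sum>i<n. of_int (c i) * basis_e n i j)"
  proof
    fix j
    show "p j = (\<Sum>i<n. of_int (c i) * basis_e n i j)"
    proof (cases "j < n")
      case True
      have "(\<Sum>i<n. of_int (c i) * basis_e n i j) =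
            (\<Sum>i<n. (if i = j then of_int (c i) else 0)) - (\<Sum>i<n. of_int (c i)) / real n"
      proof -
        have "(\<Sum>i<n. of_int (c i) * basis_e n i j) =
            (\<Sum>i<n. (if i = j then of_int (c i) else 0) - of_int (c i) / real n)"
          unfolding basis_e_def by (rule sum.cong) (use True in \<open>auto simp: algebra_simps\<close>)
        also have "\<dots> = (\<Sum>i<n. (if i = j then of_int (c i) else 0)) - (\<Sum>i<n. of_int (c i)) / real n"
          by (simp add: sum_subtractf sum_divide_distrib)
        finally show ?thesis .
      qed
      also have "\<dots> = p j" using True sc pc sp by simp
      finally show ?thesis by simp
    next
      case False
      thus ?thesis using CP unfolding p_def basis_e_def by simp
    qed
  qed
  hence "p \<in> root_lattice n" unfolding root_lattice_def using sc by (intro CollectI exI[of _ c]) simp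
  moreover have "x = (\<lambda>i. lam i + p i)" unfolding p_def by simp
  ultimately show ?thesis unfolding M_set_def using assms(1) by blast
qed

lemma char_int:
  assumes "lam \<in> char_lattice n" "i < n"
  shows "lam i - lam 0 \<in> \<int>"
proof -
  obtain c where c: "lam = (\<lambda>j. \<Sum>i<n. of_int (c i) * basis_e n i j)"
    using assms(1) unfolding char_lattice_def by auto
  have e: "j < n \<Longrightarrow> lam j = of_int (c j) - (\<Sum>i<n. of_int (c i)) / real n" for j
  proof -
    assume j: "j < n"
    have "lam j = (\<Sum>i<n. (if i = j then of_int (c i) else 0) - of_int (c i) / real n)"
      unfolding c basis_e_def by (rule sum.cong) (use j in \<open>auto simp: algebra_simps\<close>)
    also have "\<dots> = of_int (c j) - (\<Sum>i<n. of_int (c i)) / real n"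
      using j by (simp add: sum_subtractf sum_divide_distrib)
    finally show ?thesis .
  qed
  have "lam i - lam 0 = of_int (c i - c 0)" using e[of i] e[of 0] assms(2) by simp
  thus ?thesis by simp
qed

lemma int_inv:
  assumes "\<forall>k<n. x k - L \<in> \<int>" "s - L \<in> \<int>" "i < n" "j < n"
  shows "\<forall>k<n. (x(i := s, j := x i + x j - s)) k - L \<in> \<int>"
proof (intro allI impI)
  fix k assume k: "k < n"
  have e: "x i + x j - s - L = (x i - L) + (x j - L) - (s - L)" by simp
  have r: "(x i - L) + (x j - L) - (s - L) \<in> \<int>" using assms by (metis Ints_diff Ints_add)
  show "(x(i := s, j := x i + x j - s)) k - L \<in> \<int>"
  proof (cases "k = j")
    case True
    hence eq: "(x(i := s, j := x i + x j - s)) k - L = (x i - L) + (x j - L) - (s - L)" by simp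
    show ?thesis unfolding eq by (rule r)
  next
    case False thus ?thesis using assms k by auto
  qed
qed

lemma final:
  assumes "x \<in> conv_fin (weyl_orbit n lam)" "\<forall>k<n. x k - lam 0 \<in> \<int>"
    "\<forall>k<n. lam k - lam 0 \<in> \<int>"
    "i < n" "j < n" "k < n" "i \<noteq> j" "j \<noteq> k" "i \<noteq> k"
    "x i = \<alpha> + 1" "x j = \<alpha>" "x k = \<alpha> - 1"
  shows "\<exists>x\<in>M_set n lam. \<exists>\<alpha>::real. \<exists>i j k.
           i < n \<and> j < n \<and> k < n \<and> i \<noteq> j \<and> j \<noteq> k \<and> i \<noteq> k \<and>
           x i = \<alpha> + 1 \<and> x j = \<alpha> \<and> x k = \<alpha> - 1"
proof -
  have "\<forall>m<n. x m - lam m \<in> \<int>"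
  proof (intro allI impI)
    fix m assume m: "m < n"
    have "x m - lam m = (x m - lam 0) - (lam m - lam 0)" by simp
    thus "x m - lam m \<in> \<int>" using assms(2,3) m by (metis Ints_diff)
  qed
  hence "x \<in> M_set n lam" using M_mem assms(1) by blast
  thus ?thesis using assms(4-) by blast
qed

theorem lemma9:
  fixes n :: nat and lam :: "nat \<Rightarrow> real"
  assumes "n \<ge> 4"
    and "lam \<in> char_lattice n"
    and "dominant n lam"
    and "\<forall>i<n. lam i \<notin> \<int>"
    and "card (lam ` {..<n}) \<ge> 3"
  shows "\<exists>x\<in>M_set n lam. \<exists>\<alpha>::real. \<exists>i j k.
           i < n \<and> j < n \<and> k < n \<and> i \<noteq> j \<and> j \<noteq> k \<and> i \<noteq> k \<and>
           x i = \<alpha> + 1 \<and> x j = \<alpha> \<and> x k = \<alpha> - 1"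
proof -
  define L where "L = lam 0"
  have LI: "\<forall>k<n. lam k - L \<in> \<int>" using char_int[OF assms(2)] unfolding L_def by blast
  have dom: "\<And>i j. i \<le> j \<Longrightarrow> j < n \<Longrightarrow> lam j \<le> lam i" using assms(3) unfolding dominant_def by blast
  have toint: "\<And>k. k < n \<Longrightarrow> \<exists>z::int. lam k = L + of_int z"
  proof -
    fix k assume "k < n"
    then obtain z where "lam k - L = of_int z" using LI by (metis Ints_cases)
    thus "\<exists>z::int. lam k = L + of_int z" by (intro exI[of _ z]) simp
  qed
  define N where "N = n - 1"
  have nN: "N < n" "0 < N" unfolding N_def using assms(1) by auto
  obtain j where j: "j < n" "lam j \<noteq> lam 0" "lam j \<noteq> lam N"
  proof -
    have "\<not> lam ` {..<n} \<subseteq> {lam 0, lam N}"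
    proof
      assume "lam ` {..<n} \<subseteq> {lam 0, lam N}"
      hence "card (lam ` {..<n}) \<le> card {lam 0, lam N}" by (intro card_mono) auto
      also have "\<dots> \<le> 2" by (simp add: card_insert_if)
      finally show False using assms(5) by simp
    qed
    thus ?thesis using that by blast
  qed
  have j0: "0 < j" using j by (cases j) auto
  have "j \<noteq> N" using j(3) by auto
  hence jN: "j < N" using j(1) unfolding N_def by auto
  have jlt: "lam j < lam 0" "lam N < lam j" using dom[of 0 j] dom[of j N] j jN nN by force+
  obtain q r where qr: "0 < q" "q < r" "r < N" "(lam q < lam 0 \<and> lam N < lam q) \<or> (lam r < lam 0 \<and> lam N < lam r)"
  proof (cases "j + 1 < N")
    case True thus ?thesis using that[of j "j+1"] j0 jlt by auto
  next
    case False
    hence "j = N - 1" using jN by auto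
    moreover have "1 < j" using False nN assms(1) unfolding N_def by auto
    ultimately show ?thesis using that[of "j-1" j] jN jlt by auto
  qed
  have qrn: "q < n" "r < n" using qr nN by auto
  obtain B where B: "lam q = L + of_int B" using toint qrn by blast
  obtain C where C: "lam r = L + of_int C" using toint qrn by blast
  obtain D where D: "lam N = L + of_int D" using toint nN by blast
  have ord: "B \<le> 0" "C \<le> B" "D \<le> C"
    using dom[of 0 q] dom[of q r] dom[of r N] qr qrn nN B C D unfolding L_def by auto
  have hyp: "(B < 0 \<and> D < B) \<or> (C < 0 \<and> D < C)" using qr(4) B C D unfolding L_def by auto
  have n0: "0 < n" using assms(1) by simp
  have c0: "lam \<in> conv_fin (weyl_orbit n lam)" by (rule lam_in_conv)
  have i0: "\<forall>k<n. lam k - L \<in> \<int>" by (rule LI)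
  have lam0: "lam 0 = L" unfolding L_def ..
  have dist: "0 \<noteq> q" "0 \<noteq> r" "0 \<noteq> N" "q \<noteq> r" "q \<noteq> N" "r \<noteq> N"
    using qr by auto
  show ?thesis
  proof (cases "B = C")
    case True
    define s1 where "s1 = L + of_int (B + 1)"
    define x1 where "x1 = lam(0 := s1, q := lam 0 + lam q - s1)"
    have x1c: "x1 \<in> conv_fin (weyl_orbit n lam)"
      proof -
      have Bn: "B < 0" "D < B" using hyp True by auto
      have c: "lam q \<le> s1 \<and> s1 \<le> lam 0" unfolding s1_def B lam0 using Bn by simp
      show ?thesis unfolding x1_def by (rule pair_move[OF c0 n0 qrn(1) dist(1) disjI1[OF c]])
    qed
    have x1i: "\<forall>k<n. x1 k - L \<in> \<int>" unfolding x1_def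
      by (rule int_inv[OF i0]) (use nN qrn in \<open>auto simp: s1_def\<close>)
    have x1v: "x1 0 = L + of_int (B + 1)" "x1 q = L - 1" "x1 r = L + of_int C" "x1 N = L + of_int D"
      using dist B C D lam0 unfolding x1_def s1_def by auto
    define s2 where "s2 = L + of_int (D - B)"
    define x2 where "x2 = x1(q := s2, N := x1 q + x1 N - s2)"
    have x2c: "x2 \<in> conv_fin (weyl_orbit n lam)"
      proof -
      have Bn: "B \<le> 0" "D < B" using hyp True ord by auto
      have c: "x1 N \<le> s2 \<and> s2 \<le> x1 q" unfolding s2_def x1v using Bn by simp
      show ?thesis unfolding x2_def by (rule pair_move[OF x1c qrn(1) nN(1) dist(5) disjI1[OF c]])
    qed
    have x2i: "\<forall>k<n. x2 k - L \<in> \<int>" unfolding x2_def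
      by (rule int_inv[OF x1i]) (use nN qrn in \<open>auto simp: s2_def\<close>)
    have x2v: "x2 0 = L + of_int B + 1" "x2 r = L + of_int B" "x2 N = L + of_int B - 1"
      using dist x1v True unfolding x2_def s2_def by auto
    show ?thesis
      by (rule final[OF x2c x2i[unfolded L_def] LI[unfolded L_def] _ qrn(2) nN(1) _ _ _ x2v]) (use dist nN in auto)
  next
    case False
    hence BC: "C < B" using ord by auto
    show ?thesis
    proof (cases "even (B - C)")
      case True
      then obtain k where k: "B - C = 2 * k" by (metis evenE)
      have k1: "k \<ge> 1" using k BC by auto
      define s1 where "s1 = L + of_int (B - k + 1)"
      define x1 where "x1 = lam(q := s1, r := lam q + lam r - s1)"
      have x1c: "x1 \<in> conv_fin (weyl_orbit n lam)"
        proof -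
        have c: "lam r \<le> s1 \<and> s1 \<le> lam q" unfolding s1_def B C using k k1 by simp
        show ?thesis unfolding x1_def by (rule pair_move[OF c0 qrn(1) qrn(2) dist(4) disjI1[OF c]])
      qed
      have x1i: "\<forall>k<n. x1 k - L \<in> \<int>" unfolding x1_def
        by (rule int_inv[OF i0]) (use qrn in \<open>auto simp: s1_def\<close>)
      have x1v: "x1 0 = L" "x1 q = L + of_int (C + k) + 1" "x1 r = L + of_int (C + k) - 1" "x1 N = L + of_int D"
        using dist B C D lam0 k unfolding x1_def s1_def by auto
      define s2 where "s2 = L + of_int (C + k)"
      define x2 where "x2 = x1(0 := s2, N := x1 0 + x1 N - s2)"
      have x2c: "x2 \<in> conv_fin (weyl_orbit n lam)"
        proof -
        have c: "x1 N \<le> s2 \<and> s2 \<le> x1 0" unfolding s2_def x1v using k k1 ord by simp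
        show ?thesis unfolding x2_def by (rule pair_move[OF x1c n0 nN(1) dist(3) disjI1[OF c]])
      qed
      have x2i: "\<forall>k<n. x2 k - L \<in> \<int>" unfolding x2_def
        by (rule int_inv[OF x1i]) (use nN in \<open>auto simp: s2_def\<close>)
      have x2v: "x2 q = L + of_int (C + k) + 1" "x2 0 = L + of_int (C + k)" "x2 r = L + of_int (C + k) - 1"
        using dist x1v unfolding x2_def s2_def by auto
      show ?thesis
        by (rule final[OF x2c x2i[unfolded L_def] LI[unfolded L_def] qrn(1) _ qrn(2) _ _ _ x2v]) (use dist nN in auto)
    next
      case False
      then obtain k where k: "B - C = 2 * k + 1" by (metis oddE)
      have k0: "k \<ge> 0" using k BC by auto
      define s1 where "s1 = L + of_int (C + k + 1)"
      define x1 where "x1 = lam(q := s1, r := lam q + lam r - s1)"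
      have x1c: "x1 \<in> conv_fin (weyl_orbit n lam)"
        proof -
        have c: "lam r \<le> s1 \<and> s1 \<le> lam q" unfolding s1_def B C using k k0 by simp
        show ?thesis unfolding x1_def by (rule pair_move[OF c0 qrn(1) qrn(2) dist(4) disjI1[OF c]])
      qed
      have x1i: "\<forall>k<n. x1 k - L \<in> \<int>" unfolding x1_def
        by (rule int_inv[OF i0]) (use qrn in \<open>auto simp: s1_def\<close>)
      have x1v: "x1 0 = L" "x1 q = L + of_int (C + k) + 1" "x1 r = L + of_int (C + k)" "x1 N = L + of_int D"
        using dist B C D lam0 k unfolding x1_def s1_def by auto
      show ?thesis
      proof (cases "C + k + 2 \<le> 0")
        case True
        define s2 where "s2 = L + of_int (C + k + 2)"
        define x2 where "x2 = x1(0 := s2, N := x1 0 + x1 N - s2)"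
        have x2c: "x2 \<in> conv_fin (weyl_orbit n lam)"
          proof -
          have c: "x1 N \<le> s2 \<and> s2 \<le> x1 0" unfolding s2_def x1v using k k0 ord True by simp
          show ?thesis unfolding x2_def by (rule pair_move[OF x1c n0 nN(1) dist(3) disjI1[OF c]])
        qed
        have x2i: "\<forall>k<n. x2 k - L \<in> \<int>" unfolding x2_def
          by (rule int_inv[OF x1i]) (use nN in \<open>auto simp: s2_def\<close>)
        have x2v: "x2 0 = (L + of_int (C + k) + 1) + 1" "x2 q = L + of_int (C + k) + 1" "x2 r = L + of_int (C + k) + 1 - 1"
          using dist x1v unfolding x2_def s2_def by auto
        show ?thesis
          by (rule final[OF x2c x2i[unfolded L_def] LI[unfolded L_def] _ qrn(1) qrn(2) _ _ _ x2v]) (use dist nN in auto)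
      next
        case F2: False
        have CD: "D < C" using F2 k ord hyp by auto
        define s2 where "s2 = L + of_int (D - C - k + 1)"
        define x2 where "x2 = x1(0 := s2, N := x1 0 + x1 N - s2)"
        have x2c: "x2 \<in> conv_fin (weyl_orbit n lam)"
          proof -
          have hi: "D - C - k + 1 \<le> 0" using CD k0 by linarith
          hence "real_of_int (D - C - k + 1) \<le> 0" by (simp only: of_int_le_0_iff)
          hence h2: "real_of_int D - real_of_int C - real_of_int k + 1 \<le> 0" by simp
          have c: "x1 N \<le> s2 \<and> s2 \<le> x1 0" unfolding s2_def x1v using k k0 ord F2 CD h2 by simp
          show ?thesis unfolding x2_def by (rule pair_move[OF x1c n0 nN(1) dist(3) disjI1[OF c]])
        qed
        have x2i: "\<forall>k<n. x2 k - L \<in> \<int>" unfolding x2_def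
          by (rule int_inv[OF x1i]) (use nN in \<open>auto simp: s2_def\<close>)
        have x2v: "x2 q = L + of_int (C + k) + 1" "x2 r = L + of_int (C + k)" "x2 N = L + of_int (C + k) - 1"
          using dist x1v unfolding x2_def s2_def by auto
        show ?thesis
          by (rule final[OF x2c x2i[unfolded L_def] LI[unfolded L_def] qrn(1) qrn(2) nN(1) _ _ _ x2v]) (use dist nN in auto)
      qed
    qed
  qed
qed

end
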